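(* Let $\mathfrak L$ be a color gLt-algebra admitting a multiplicative basis $\mathfrak B=\{e_i\}_{i\in I}$. Then $\mathfrak L=\bigoplus_{[i]\in I/\sim}\mathfrak J_{[i]}$, where each $\mathfrak J_{[i]}$ is a color gLt-ideal of $\mathfrak L$ admitting a multiplicative basis inherited by the one of $\mathfrak L$ (namely $\{e_j\}_{j\in[i]}$).
   Context: Let $\mathbb F$ be a field, $\mathbb G$ an abelian group, $n\ge 2$, and $\epsilon:\mathbb G\times\mathbb G\to\mathbb F\setminus\{0\}$ a bicharacter ($\epsilon(k,g+h)=\epsilon(k,g)\epsilon(k,h)$, $\epsilon(g+h,k)=\epsilon(g,k)\epsilon(h,k)$, $\epsilon(g,h)\epsilon(h,g)=1$). A graded $n$-ary algebra is a $\mathbb G$-graded vector space $\mathfrak L=\bigoplus_{g\in\mathbb G}\mathfrak L_g$ with an $n$-linear map $\langle\cdot,\dots,\cdot\rangle:\mathfrak L^n\to\mathfrak L$ such that $\langle\mathfrak L_{g_1},\dots,\mathfrak L_{g_n}\rangle\subset\mathfrak L_{g_1+\dots+g_n}$. For $\sigma\in\mathbb S_n$ write $\langle x_1,\dots,x_n\rangle_\sigma:=\langle x_{\sigma(1)},\dots,x_{\sigma(n)}\rangle$; for subsets $A_1,\dots,A_n$, $\langle A_1,\dots,A_n\rangle_\sigma$ denotes the linear span of all $\langle x_1,\dots,x_n\rangle_\sigma$ with $x_r\in A_r$. A color gLt-algebra is a graded $n$-ary algebra satisfying, for each $k=1,\dots,n$ and fixed scalars $\alpha^{\sigma_1,\sigma_2}_{i,j,k}\in\mathbb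 F$, the color version (each term on the right multiplied by the product of values of $\epsilon$ on the degrees of the homogeneous arguments transposed in passing from the left-hand order to the order of that term) of the identity $\langle y_1,\dots,y_{k-1},\langle x_1,\dots,x_n\rangle,y_k,\dots,y_{n-1}\rangle=\sum_{1\le i,j\le n,\,\sigma_1\in\mathbb S_n,\,\sigma_2\in\mathbb S_{n-1}}\alpha^{\sigma_1,\sigma_2}_{i,j,k}\langle x_{\sigma_1(1)},\dots,x_{\sigma_1(i-1)},\langle y_{\sigma_2(1)},\dots,y_{\sigma_2(j-1)},x_{\sigma_1(i)},y_{\sigma_2(j)},\dots,y_{\sigma_2(n-1)}\rangle,x_{\sigma_1(i+1)},\dots,x_{\sigma_1(n)}\rangle$. A $\mathbb G$-graded subspace $\mathcal I\subset\mathfrak L$ is a color gLt-ideal if $\langle\mathcal I,\mathfrak L,\dots,\mathfrak L\rangle_\sigma\subset\mathcal I$ for every $\sigma\in\mathbb S_n$. A basis $\mathfrak B=\{e_i\}_{i\in I}$ of homogeneous elements of $\mathfrak L$ is multiplicative if for all $i_1,\dots,i_n\in I$, $\langle e_{i_1},\dots,e_{i_n}\rangle\in\mathbb Fe_j$ for some $j\in I$. Such a basis is regarded as a quasi-multiplicative basis with $\mathbb V=0$ and $\mathbb W=\mathfrak L$ (quasi-multiplicative basis: $\mathfrak L=\mathbb V\oplus\mathbb W$, $\mathbb V,\mathbb W\ne0$ graded subspaces, $\{e_i\}_{i\in I}$ a homogeneous basis of $\mathbb W$ with: products of basis elements in some $\mathbb Fe_j$ or in $\mathbb V$; for $0<k<n$,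 $\langle e_{i_1},\dots,e_{i_k},\mathbb V,\dots,\mathbb V\rangle_\sigma\subset\mathbb Fe_{j_\sigma}$; $\langle\mathbb V,\dots,\mathbb V\rangle$ in some $\mathbb Fe_j$ or in $\mathbb V$). Index maps: let $v$ be a symbol not in $I$, $\mathfrak I:=I\,\dot\cup\,\{v\}$; for each $j\in\mathfrak I$ take a new symbol $\overline j$, $\overline I:=\{\overline i:i\in I\}$, $\overline{\mathfrak I}:=\overline I\,\dot\cup\,\{\overline v\}$; set $\overline{(\overline j)}:=j$, $\overline J:=\{\overline j:j\in J\}$ for a set $J$ of symbols ($\overline\emptyset=\emptyset$). Put $u_j:=e_j$ for $j\in I$ and $u_v:=\mathbb V$. For $\sigma\in\mathbb S_n$ and $(j_1,\dots,j_n)\in\mathfrak I^n$ let $a_\sigma(j_1,\dots,j_n)=\{r\}$ if $r\in I$ and $0\ne\langle u_{j_1},\dots,u_{j_n}\rangle_\sigma\subset\mathbb Fe_r$, $=\{v\}$ if $0\ne\langle u_{j_1},\dots,u_{j_n}\rangle_\sigma\subset\mathbb V$, and $=\emptyset$ otherwise. For $j,j_2,\dots,j_n\in\mathfrak I$ let $b_\sigma(j,\overline j_2,\dots,\overline j_n):=\{x\in\mathfrak I: a_\sigma(x,j_2,\dots,j_n)=\{j\}\}$. Define $\mu$ on $(\mathfrak I\,\dot\cup\,\overline{\mathfrak I})\times(\mathfrak I^{n-1}\,\dot\cup\,\overline{\mathfrak I}^{n-1})$ with values subsets of $\mathfrak I$ by: $\mu(j,j_1,\dots,j_{n-1})=\bigcup_{\sigma\in\mathbb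 S_n}a_\sigma(j,j_1,\dots,j_{n-1})$ for $j,j_1,\dots,j_{n-1}\in\mathfrak I$; $\mu(j,\overline j_1,\dots,\overline j_{n-1})=\bigcup_{\sigma\in\mathbb S_n}b_\sigma(j,\overline j_1,\dots,\overline j_{n-1})$ for $j,j_1,\dots,j_{n-1}\in\mathfrak I$; $\mu(\overline j,j_1,\dots,j_{n-1})=\bigcup_{1\le k\le n-1,\ \sigma\in\mathbb S_n}b_\sigma(j_k,\overline j,\overline j_1,\dots,\overline j_{k-1},\overline j_{k+1},\dots,\overline j_{n-1})$ for $j,j_1,\dots,j_{n-1}\in\mathfrak I$; and $\mu(\overline j,\overline j_1,\dots,\overline j_{n-1})=\emptyset$. Define $\phi$ on pairs $(J,X)$ with $J\subset I\,\dot\cup\,\overline I$ and $X\in\mathfrak I^{n-1}\,\dot\cup\,\overline{\mathfrak I}^{n-1}$ by $\phi(\emptyset,X)=\emptyset$ and, for $J\ne\emptyset$, $\phi(J,X):=K\cup\overline K$ where $K:=\big(\bigcup_{j\in J}\mu(j,X)\big)\setminus\{v\}$. Connections: for distinct $i,j\in I$, $i$ is connected to $j$ if there exist $t\ge1$, $X_1,\dots,X_t\in\mathfrak I^{n-1}\,\dot\cup\,\overline{\mathfrak I}^{n-1}$ and $\widetilde i\in\{i,\overline i\}$ such that $\phi(\{\widetilde i\},X_1)\ne\emptyset$, …, $\phi(\cdots\phi(\{\widetilde i\},X_1)\cdots,X_{t-1})\ne\emptyset$, and $j\in\phi(\cdots\phi(\phi(\{\widetilde i\},X_1),X_2)\cdots,X_t)$;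 every $i$ is connected to itself. Being connected is an equivalence relation $\sim$ on $I$; $[i]$ denotes the class of $i$. Define $\mathbb V_{[i]}:=\big(\sum_{i_1,\dots,i_n\in[i]}\mathbb F\langle e_{i_1},\dots,e_{i_n}\rangle\big)\cap\mathbb V$, $\mathbb W_{[i]}:=\bigoplus_{j\in[i]}\mathbb Fe_j$, and $\mathfrak J_{[i]}:=\mathbb V_{[i]}\oplus\mathbb W_{[i]}$ (here $\mathbb V_{[i]}=0$). *)

theory Defs
  imports Complex_Main "HOL-Combinatorics.Permutations"
begin

(* Conventions: all indices are 0-based.  An n-ary product is a map on lists
   (only lists of length n matter).  A permutation of {1..n} is a map
   sigma with sigma permutes {..<n}. *)

definition internal_direct_sum ::
  "('k::field \<Rightarrow> 'v::ab_group_add \<Rightarrow> 'v) \<Rightarrow> ('a \<Rightarrow> 'v set) \<Rightarrow> 'a set \<Rightarrow> 'v set \<Rightarrow> bool" where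
  "internal_direct_sum scale A S W \<longleftrightarrow>
     (\<forall>a\<in>S. module.subspace scale (A a)) \<and>
     (\<forall>w. w \<in> W \<longleftrightarrow> (\<exists>f. (\<forall>a. a \<notin> S \<longrightarrow> f a = 0) \<and> finite {a. f a \<noteq> 0} \<and>
                          (\<forall>a\<in>S. f a \<in> A a) \<and> w = sum f {a. f a \<noteq> 0})) \<and>
     (\<forall>w. \<forall>f g. (\<forall>a. a \<notin> S \<longrightarrow> f a = 0) \<and> finite {a. f a \<noteq> 0} \<and>
                 (\<forall>a\<in>S. f a \<in> A a) \<and> w = sum f {a. f a \<noteq> 0} \<and>
                 (\<forall>a. a \<notin> S \<longrightarrow> g a = 0) \<and> finite {a. g a \<noteq> 0} \<and>
                 (\<forall>a\<in>S. g a \<in> A a) \<and> w = sum g {a. g a \<noteq> 0} \<longrightarrow> f = g)"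

definition graded_space :: "('k::field \<Rightarrow> 'v::ab_group_add \<Rightarrow> 'v) \<Rightarrow> ('g \<Rightarrow> 'v set) \<Rightarrow> bool" where
  "graded_space scale Lg \<longleftrightarrow> internal_direct_sum scale Lg UNIV UNIV"

definition graded_subspace ::
  "('k::field \<Rightarrow> 'v::ab_group_add \<Rightarrow> 'v) \<Rightarrow> ('g \<Rightarrow> 'v set) \<Rightarrow> 'v set \<Rightarrow> bool" where
  "graded_subspace scale Lg J \<longleftrightarrow> module.subspace scale J \<and>
     (\<forall>x\<in>J. \<exists>f. finite {g. f g \<noteq> 0} \<and> (\<forall>g. f g \<in> J \<inter> Lg g) \<and> x = sum f {g. f g \<noteq> 0})"

definition n_linear :: "('k::field \<Rightarrow> 'v::ab_group_add \<Rightarrow> 'v) \<Rightarrow> nat \<Rightarrow> ('v list \<Rightarrow> 'v) \<Rightarrow> bool" where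
  "n_linear scale n br \<longleftrightarrow>
     (\<forall>xs k a b c. length xs = n \<and> k < n \<longrightarrow>
        br (xs[k := a + b]) = br (xs[k := a]) + br (xs[k := b]) \<and>
        br (xs[k := scale c a]) = scale c (br (xs[k := a])))"

definition graded_product :: "('g::ab_group_add \<Rightarrow> 'v set) \<Rightarrow> nat \<Rightarrow> ('v list \<Rightarrow> 'v) \<Rightarrow> bool" where
  "graded_product Lg n br \<longleftrightarrow>
     (\<forall>xs ds. length xs = n \<and> length ds = n \<and> (\<forall>r<n. xs ! r \<in> Lg (ds ! r)) \<longrightarrow>
        br xs \<in> Lg (sum_list ds))"

definition graded_nary_algebra ::
  "('k::field \<Rightarrow> 'v::ab_group_add \<Rightarrow> 'v) \<Rightarrow> ('g::ab_group_add \<Rightarrow> 'v set) \<Rightarrow> nat \<Rightarrow> ('v list \<Rightarrow> 'v) \<Rightarrow> bool" where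
  "graded_nary_algebra scale Lg n br \<longleftrightarrow>
     vector_space scale \<and> graded_space scale Lg \<and> n_linear scale n br \<and> graded_product Lg n br"

definition bicharacter :: "('g::ab_group_add \<Rightarrow> 'g \<Rightarrow> 'k::field) \<Rightarrow> bool" where
  "bicharacter eps \<longleftrightarrow>
     (\<forall>g h. eps g h \<noteq> 0) \<and>
     (\<forall>k g h. eps k (g + h) = eps k g * eps k h) \<and>
     (\<forall>k g h. eps (g + h) k = eps g k * eps h k) \<and>
     (\<forall>g h. eps g h * eps h g = 1)"

definition perm_args :: "(nat \<Rightarrow> nat) \<Rightarrow> 'v list \<Rightarrow> 'v list" where
  "perm_args \<sigma> xs = map (\<lambda>t. xs ! \<sigma> t) [0..<length xs]"

(* color factor: product of eps(deg a, deg b) over all pairs of arguments a, b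
   such that a precedes b in the order L but b precedes a in the order R *)
definition color_factor :: "('g \<Rightarrow> 'g \<Rightarrow> 'k::field) \<Rightarrow> ('a \<Rightarrow> 'g) \<Rightarrow> 'a list \<Rightarrow> 'a list \<Rightarrow> 'k" where
  "color_factor eps d L R =
     (\<Prod>(p, q) \<in> {(p, q). p < q \<and> q < length L \<and>
          (\<exists>p' q'. q' < p' \<and> p' < length R \<and> R ! p' = L ! p \<and> R ! q' = L ! q)}.
        eps (d (L ! p)) (d (L ! q)))"

(* arguments: Inl r = x_r, Inr s = y_s *)
definition lab_deg :: "'g list \<Rightarrow> 'g list \<Rightarrow> nat + nat \<Rightarrow> 'g" where
  "lab_deg dx dy l = (case l of Inl r \<Rightarrow> dx ! r | Inr s \<Rightarrow> dy ! s)"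

definition lhs_labels :: "nat \<Rightarrow> nat \<Rightarrow> (nat + nat) list" where
  "lhs_labels n k = map Inr [0..<k] @ map Inl [0..<n] @ map Inr [k..<n - 1]"

definition rhs_labels :: "nat \<Rightarrow> nat \<Rightarrow> nat \<Rightarrow> (nat \<Rightarrow> nat) \<Rightarrow> (nat \<Rightarrow> nat) \<Rightarrow> (nat + nat) list" where
  "rhs_labels n i j \<sigma>1 \<sigma>2 =
     map (Inl \<circ> \<sigma>1) [0..<i] @ map (Inr \<circ> \<sigma>2) [0..<j] @ [Inl (\<sigma>1 i)] @
     map (Inr \<circ> \<sigma>2) [j..<n - 1] @ map (Inl \<circ> \<sigma>1) [Suc i..<n]"

definition gLt_term :: "('v list \<Rightarrow> 'v) \<Rightarrow> 'v list \<Rightarrow> 'v list \<Rightarrow> nat \<Rightarrow> nat \<Rightarrow> (nat \<Rightarrow> nat) \<Rightarrow> (nat \<Rightarrow> nat) \<Rightarrow> 'v" where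
  "gLt_term br xs ys i j \<sigma>1 \<sigma>2 =
     (let xp = perm_args \<sigma>1 xs; yp = perm_args \<sigma>2 ys
      in br (take i xp @ [br (take j yp @ [xp ! i] @ drop j yp)] @ drop (Suc i) xp))"

definition color_gLt_identity ::
  "('k::field \<Rightarrow> 'v::ab_group_add \<Rightarrow> 'v) \<Rightarrow> ('g::ab_group_add \<Rightarrow> 'v set) \<Rightarrow> ('g \<Rightarrow> 'g \<Rightarrow> 'k) \<Rightarrow> nat \<Rightarrow>
   ('v list \<Rightarrow> 'v) \<Rightarrow> (nat \<Rightarrow> nat \<Rightarrow> nat \<Rightarrow> (nat \<Rightarrow> nat) \<Rightarrow> (nat \<Rightarrow> nat) \<Rightarrow> 'k) \<Rightarrow> bool" where
  "color_gLt_identity scale Lg eps n br \<alpha> \<longleftrightarrow>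
     (\<forall>k<n. \<forall>xs ys dx dy.
        length xs = n \<and> length ys = n - 1 \<and> length dx = n \<and> length dy = n - 1 \<and>
        (\<forall>r<n. xs ! r \<in> Lg (dx ! r)) \<and> (\<forall>s<n - 1. ys ! s \<in> Lg (dy ! s)) \<longrightarrow>
        br (take k ys @ [br xs] @ drop k ys) =
        (\<Sum>i<n. \<Sum>j<n. \<Sum>\<sigma>1\<in>{\<sigma>. \<sigma> permutes {..<n}}. \<Sum>\<sigma>2\<in>{\<sigma>. \<sigma> permutes {..<n - 1}}.
           scale (\<alpha> i j k \<sigma>1 \<sigma>2 *
                  color_factor eps (lab_deg dx dy) (lhs_labels n k) (rhs_labels n i j \<sigma>1 \<sigma>2))
                 (gLt_term br xs ys i j \<sigma>1 \<sigma>2)))"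

definition color_gLt_algebra ::
  "('k::field \<Rightarrow> 'v::ab_group_add \<Rightarrow> 'v) \<Rightarrow> ('g::ab_group_add \<Rightarrow> 'v set) \<Rightarrow> ('g \<Rightarrow> 'g \<Rightarrow> 'k) \<Rightarrow> nat \<Rightarrow>
   ('v list \<Rightarrow> 'v) \<Rightarrow> (nat \<Rightarrow> nat \<Rightarrow> nat \<Rightarrow> (nat \<Rightarrow> nat) \<Rightarrow> (nat \<Rightarrow> nat) \<Rightarrow> 'k) \<Rightarrow> bool" where
  "color_gLt_algebra scale Lg eps n br \<alpha> \<longleftrightarrow>
     2 \<le> n \<and> bicharacter eps \<and> graded_nary_algebra scale Lg n br \<and>
     color_gLt_identity scale Lg eps n br \<alpha>"

definition color_gLt_ideal ::
  "('k::field \<Rightarrow> 'v::ab_group_add \<Rightarrow> 'v) \<Rightarrow> ('g \<Rightarrow> 'v set) \<Rightarrow> nat \<Rightarrow> ('v list \<Rightarrow> 'v) \<Rightarrow> 'v set \<Rightarrow> bool" where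
  "color_gLt_ideal scale Lg n br J \<longleftrightarrow>
     graded_subspace scale Lg J \<and>
     (\<forall>\<sigma>. \<sigma> permutes {..<n} \<longrightarrow>
        (\<forall>xs. length xs = n \<and> xs ! 0 \<in> J \<longrightarrow> br (perm_args \<sigma> xs) \<in> J))"

definition homogeneous_basis ::
  "('k::field \<Rightarrow> 'v::ab_group_add \<Rightarrow> 'v) \<Rightarrow> ('g \<Rightarrow> 'v set) \<Rightarrow> 'v set \<Rightarrow> ('i \<Rightarrow> 'v) \<Rightarrow> 'i set \<Rightarrow> bool" where
  "homogeneous_basis scale Lg W e I \<longleftrightarrow>
     inj_on e I \<and> \<not> module.dependent scale (e ` I) \<and> module.span scale (e ` I) = W \<and>
     (\<forall>i\<in>I. \<exists>g. e i \<in> Lg g)"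

definition products_multiplicative ::
  "('k::field \<Rightarrow> 'v::ab_group_add \<Rightarrow> 'v) \<Rightarrow> nat \<Rightarrow> ('v list \<Rightarrow> 'v) \<Rightarrow> ('i \<Rightarrow> 'v) \<Rightarrow> 'i set \<Rightarrow> bool" where
  "products_multiplicative scale n br e I \<longleftrightarrow>
     (\<forall>is. length is = n \<and> set is \<subseteq> I \<longrightarrow> (\<exists>j\<in>I. \<exists>c. br (map e is) = scale c (e j)))"

definition multiplicative_basis ::
  "('k::field \<Rightarrow> 'v::ab_group_add \<Rightarrow> 'v) \<Rightarrow> ('g \<Rightarrow> 'v set) \<Rightarrow> nat \<Rightarrow> ('v list \<Rightarrow> 'v) \<Rightarrow> 'v set \<Rightarrow>
   ('i \<Rightarrow> 'v) \<Rightarrow> 'i set \<Rightarrow> bool" where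
  "multiplicative_basis scale Lg n br W e I \<longleftrightarrow>
     homogeneous_basis scale Lg W e I \<and> products_multiplicative scale n br e I"

(* frak I = I \<union> {v}, with Some i = i and None = v.
   Symbols of frak I \<union> overline(frak I) are pairs (b, j), b = True meaning barred.
   Elements of frak I^(n-1) \<union> overline(frak I)^(n-1) are pairs (b, js). *)

definition frakI :: "'i set \<Rightarrow> 'i option set" where
  "frakI I = insert None (Some ` I)"

definition uset :: "('i \<Rightarrow> 'v) \<Rightarrow> 'v set \<Rightarrow> 'i option \<Rightarrow> 'v set" where
  "uset e V j = (case j of Some i \<Rightarrow> {e i} | None \<Rightarrow> V)"

definition prod_span ::
  "('k::field \<Rightarrow> 'v::ab_group_add \<Rightarrow> 'v) \<Rightarrow> nat \<Rightarrow> ('v list \<Rightarrow> 'v) \<Rightarrow> (nat \<Rightarrow> nat) \<Rightarrow> 'v set list \<Rightarrow> 'v set" where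
  "prod_span scale n br \<sigma> As =
     module.span scale {br (perm_args \<sigma> xs) | xs. length xs = n \<and> (\<forall>r<n. xs ! r \<in> As ! r)}"

definition a_map ::
  "('k::field \<Rightarrow> 'v::ab_group_add \<Rightarrow> 'v) \<Rightarrow> nat \<Rightarrow> ('v list \<Rightarrow> 'v) \<Rightarrow> ('i \<Rightarrow> 'v) \<Rightarrow> 'i set \<Rightarrow> 'v set \<Rightarrow>
   (nat \<Rightarrow> nat) \<Rightarrow> 'i option list \<Rightarrow> 'i option set" where
  "a_map scale n br e I V \<sigma> js =
     (let P = prod_span scale n br \<sigma> (map (uset e V) js) in
       {Some r | r. r \<in> I \<and> P \<noteq> {0} \<and> P \<subseteq> module.span scale {e r}} \<union>
       (if P \<noteq> {0} \<and> P \<subseteq> V then {None} else {}))"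

definition b_map ::
  "('k::field \<Rightarrow> 'v::ab_group_add \<Rightarrow> 'v) \<Rightarrow> nat \<Rightarrow> ('v list \<Rightarrow> 'v) \<Rightarrow> ('i \<Rightarrow> 'v) \<Rightarrow> 'i set \<Rightarrow> 'v set \<Rightarrow>
   (nat \<Rightarrow> nat) \<Rightarrow> 'i option \<Rightarrow> 'i option list \<Rightarrow> 'i option set" where
  "b_map scale n br e I V \<sigma> j js = {x \<in> frakI I. a_map scale n br e I V \<sigma> (x # js) = {j}}"

definition mu ::
  "('k::field \<Rightarrow> 'v::ab_group_add \<Rightarrow> 'v) \<Rightarrow> nat \<Rightarrow> ('v list \<Rightarrow> 'v) \<Rightarrow> ('i \<Rightarrow> 'v) \<Rightarrow> 'i set \<Rightarrow> 'v set \<Rightarrow>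
   bool \<times> 'i option \<Rightarrow> bool \<times> 'i option list \<Rightarrow> 'i option set" where
  "mu scale n br e I V jj X =
     (case (jj, X) of
        ((False, j), (False, js)) \<Rightarrow>
           (\<Union>\<sigma>\<in>{\<sigma>. \<sigma> permutes {..<n}}. a_map scale n br e I V \<sigma> (j # js))
      | ((False, j), (True, js)) \<Rightarrow>
           (\<Union>\<sigma>\<in>{\<sigma>. \<sigma> permutes {..<n}}. b_map scale n br e I V \<sigma> j js)
      | ((True, j), (False, js)) \<Rightarrow>
           (\<Union>k\<in>{..<n - 1}. \<Union>\<sigma>\<in>{\<sigma>. \<sigma> permutes {..<n}}.
              b_map scale n br e I V \<sigma> (js ! k) (j # take k js @ drop (Suc k) js))
      | ((True, j), (True, js)) \<Rightarrow> {})"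

definition phi ::
  "('k::field \<Rightarrow> 'v::ab_group_add \<Rightarrow> 'v) \<Rightarrow> nat \<Rightarrow> ('v list \<Rightarrow> 'v) \<Rightarrow> ('i \<Rightarrow> 'v) \<Rightarrow> 'i set \<Rightarrow> 'v set \<Rightarrow>
   (bool \<times> 'i option) set \<Rightarrow> bool \<times> 'i option list \<Rightarrow> (bool \<times> 'i option) set" where
  "phi scale n br e I V J X =
     (if J = {} then {}
      else (let K = (\<Union>j\<in>J. mu scale n br e I V j X) - {None} in UNIV \<times> K))"

definition phi_iter ::
  "('k::field \<Rightarrow> 'v::ab_group_add \<Rightarrow> 'v) \<Rightarrow> nat \<Rightarrow> ('v list \<Rightarrow> 'v) \<Rightarrow> ('i \<Rightarrow> 'v) \<Rightarrow> 'i set \<Rightarrow> 'v set \<Rightarrow>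
   (bool \<times> 'i option) set \<Rightarrow> (bool \<times> 'i option list) list \<Rightarrow> (bool \<times> 'i option) set" where
  "phi_iter scale n br e I V J Xs = fold (\<lambda>X A. phi scale n br e I V A X) Xs J"

definition valid_tuple :: "'i set \<Rightarrow> nat \<Rightarrow> bool \<times> 'i option list \<Rightarrow> bool" where
  "valid_tuple I n X \<longleftrightarrow> length (snd X) = n - 1 \<and> set (snd X) \<subseteq> frakI I"

definition connected ::
  "('k::field \<Rightarrow> 'v::ab_group_add \<Rightarrow> 'v) \<Rightarrow> nat \<Rightarrow> ('v list \<Rightarrow> 'v) \<Rightarrow> ('i \<Rightarrow> 'v) \<Rightarrow> 'i set \<Rightarrow> 'v set \<Rightarrow>
   'i \<Rightarrow> 'i \<Rightarrow> bool" where
  "connected scale n br e I V i j \<longleftrightarrow> i \<in> I \<and> j \<in> I \<and>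
     (i = j \<or>
      (\<exists>Xs it. Xs \<noteq> [] \<and> (\<forall>X\<in>set Xs. valid_tuple I n X) \<and> it \<in> {(False, Some i), (True, Some i)} \<and>
         (\<forall>m. 1 \<le> m \<and> m < length Xs \<longrightarrow> phi_iter scale n br e I V {it} (take m Xs) \<noteq> {}) \<and>
         (False, Some j) \<in> phi_iter scale n br e I V {it} Xs))"

definition conn_rel ::
  "('k::field \<Rightarrow> 'v::ab_group_add \<Rightarrow> 'v) \<Rightarrow> nat \<Rightarrow> ('v list \<Rightarrow> 'v) \<Rightarrow> ('i \<Rightarrow> 'v) \<Rightarrow> 'i set \<Rightarrow> 'v set \<Rightarrow> ('i \<times> 'i) set" where
  "conn_rel scale n br e I V = {(i, j). connected scale n br e I V i j}"

definition J_class ::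
  "('k::field \<Rightarrow> 'v::ab_group_add \<Rightarrow> 'v) \<Rightarrow> nat \<Rightarrow> ('v list \<Rightarrow> 'v) \<Rightarrow> ('i \<Rightarrow> 'v) \<Rightarrow> 'v set \<Rightarrow> 'i set \<Rightarrow> 'v set" where
  "J_class scale n br e V C =
     {a + b | a b. a \<in> module.span scale {br (map e is) | is. length is = n \<and> set is \<subseteq> C} \<inter> V \<and>
                  b \<in> module.span scale (e ` C)}"

end

theory Submission
  imports Defs
begin


definition Erel where
  "Erel scale n br e I V = {(x,y). \<exists>b X. valid_tuple I n X \<and> Some y \<in> mu scale n br e I V (b, Some x) X}"

lemma ErelI: "valid_tuple I n X \<Longrightarrow> Some y \<in> mu scale n br e I V (b, Some x) X \<Longrightarrow> (x, y) \<in> Erel scale n br e I V"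
  unfolding Erel_def by blast

lemma phi_eq: "phi scale n br e I V J X = {t. \<exists>s\<in>J. snd t \<noteq> None \<and> snd t \<in> mu scale n br e I V s X}"
  unfolding phi_def by (auto simp: Let_def)

lemma phi_iter_append: "phi_iter scale n br e I V J (Xs @ Ys) = phi_iter scale n br e I V (phi_iter scale n br e I V J Xs) Ys"
  by (simp add: phi_iter_def)

lemma phi_iter_snoc: "phi_iter scale n br e I V J (Xs @ [X]) = phi scale n br e I V (phi_iter scale n br e I V J Xs) X"
  by (simp add: phi_iter_def)

lemma phi_iter_empty: "phi_iter scale n br e I V {} Ys = {}"
  by (induction Ys) (auto simp: phi_iter_def phi_def)

lemma phi_iter_prefix:
  assumes "phi_iter scale n br e I V J Xs \<noteq> {}"
  shows "phi_iter scale n br e I V J (take m Xs) \<noteq> {}"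
proof
  assume "phi_iter scale n br e I V J (take m Xs) = {}"
  then have "phi_iter scale n br e I V J (take m Xs @ drop m Xs) = {}"
    by (simp only: phi_iter_append phi_iter_empty)
  with assms show False by simp
qed

lemma path_to_E:
  assumes "Xs \<noteq> []" "\<forall>X\<in>set Xs. valid_tuple I n X" "t \<in> phi_iter scale n br e I V {(b0, Some i)} Xs"
  shows "\<exists>y. snd t = Some y \<and> (i, y) \<in> (Erel scale n br e I V)\<^sup>+"
  using assms
proof (induction Xs arbitrary: t rule: rev_induct)
  case Nil then show ?case by simp
next
  case (snoc X Xs)
  from snoc.prems(3) obtain s where s: "s \<in> phi_iter scale n br e I V {(b0, Some i)} Xs"
    "snd t \<noteq> None" "snd t \<in> mu scale n br e I V s X"
    by (auto simp: phi_iter_snoc phi_eq)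
  from s obtain y where y: "snd t = Some y" by auto
  have vX: "valid_tuple I n X" using snoc.prems by auto
  show ?case
  proof (cases "Xs = []")
    case True
    then have "s = (b0, Some i)" using s by (simp add: phi_iter_def)
    then have "(i, y) \<in> Erel scale n br e I V" using s y vX by (auto intro: ErelI)
    then show ?thesis using y by auto
  next
    case False
    from snoc.IH[OF False _ s(1)] snoc.prems obtain z where z: "snd s = Some z" "(i, z) \<in> (Erel scale n br e I V)\<^sup>+"
      by auto
    have "s = (fst s, Some z)" using z by (metis prod.collapse)
    then have "(z, y) \<in> Erel scale n br e I V" using s y vX ErelI by metis
    then show ?thesis using y z by auto
  qed
qed

lemma E_to_path:
  assumes "(i, j) \<in> (Erel scale n br e I V)\<^sup>+"
  shows "\<exists>b Xs. Xs \<noteq> [] \<and> (\<forall>X\<in>set Xs. valid_tuple I n X) \<and>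
           (\<forall>c. (c, Some j) \<in> phi_iter scale n br e I V {(b, Some i)} Xs)"
  using assms
proof (induction rule: trancl_induct)
  case (base y)
  then obtain b X where "valid_tuple I n X" "Some y \<in> mu scale n br e I V (b, Some i) X"
    unfolding Erel_def by auto
  then show ?case
    by (intro exI[of _ b] exI[of _ "[X]"]) (auto simp: phi_iter_def phi_eq)
next
  case (step y z)
  from step.IH obtain b Xs where IH: "Xs \<noteq> []" "\<forall>X\<in>set Xs. valid_tuple I n X"
    "\<forall>c. (c, Some y) \<in> phi_iter scale n br e I V {(b, Some i)} Xs" by blast
  from step.hyps(2) obtain b' X where X: "valid_tuple I n X" "Some z \<in> mu scale n br e I V (b', Some y) X"
    unfolding Erel_def by auto
  show ?case
    apply (intro exI[of _ b] exI[of _ "Xs @ [X]"])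
    using IH X by (auto simp: phi_iter_snoc phi_eq)
qed

lemma connected_iff:
  "connected scale n br e I V i j \<longleftrightarrow> i \<in> I \<and> j \<in> I \<and> (i = j \<or> (i, j) \<in> (Erel scale n br e I V)\<^sup>+)"
proof
  assume c: "connected scale n br e I V i j"
  show "i \<in> I \<and> j \<in> I \<and> (i = j \<or> (i, j) \<in> (Erel scale n br e I V)\<^sup>+)"
  proof (cases "i = j")
    case False
    with c obtain Xs it where h: "Xs \<noteq> []" "\<forall>X\<in>set Xs. valid_tuple I n X"
      "it \<in> {(False, Some i), (True, Some i)}" "(False, Some j) \<in> phi_iter scale n br e I V {it} Xs"
      unfolding connected_def by blast
    from h(3) obtain b0 where "it = (b0, Some i)" by auto
    with path_to_E[OF h(1,2)] h(4) have "(i, j) \<in> (Erel scale n br e I V)\<^sup>+" by fastforce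
    then show ?thesis using c unfolding connected_def by auto
  qed (use c in \<open>auto simp: connected_def\<close>)
next
  assume h: "i \<in> I \<and> j \<in> I \<and> (i = j \<or> (i, j) \<in> (Erel scale n br e I V)\<^sup>+)"
  show "connected scale n br e I V i j"
  proof (cases "i = j")
    case False
    with h have "(i, j) \<in> (Erel scale n br e I V)\<^sup>+" by auto
    from E_to_path[OF this] obtain b Xs where p: "Xs \<noteq> []" "\<forall>X\<in>set Xs. valid_tuple I n X"
      "\<forall>c. (c, Some j) \<in> phi_iter scale n br e I V {(b, Some i)} Xs" by blast
    have ne: "phi_iter scale n br e I V {(b, Some i)} Xs \<noteq> {}" using p(3) by blast
    show ?thesis unfolding connected_def
      apply (intro conjI disjI2 exI[of _ Xs] exI[of _ "(b, Some i)"])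
      using h p phi_iter_prefix[OF ne] by (auto intro: bool.exhaust)
  qed (use h in \<open>auto simp: connected_def\<close>)
qed



definition uvec :: "('i \<Rightarrow> 'v::ab_group_add) \<Rightarrow> 'i option \<Rightarrow> 'v" where
  "uvec e j = (case j of Some i \<Rightarrow> e i | None \<Rightarrow> 0)"

lemma uset_eq: "uset e {0} j = {uvec e j}"
  by (cases j) (auto simp: uset_def uvec_def)

lemma prod_span_eq:
  assumes "length js = n"
  shows "prod_span scale n br \<sigma> (map (uset e {0}) js) = module.span scale {br (perm_args \<sigma> (map (uvec e) js))}"
proof -
  have "{br (perm_args \<sigma> xs) | xs. length xs = n \<and> (\<forall>r<n. xs ! r \<in> map (uset e {0}) js ! r)}
        = {br (perm_args \<sigma> (map (uvec e) js))}"
  proof (intro equalityI subsetI)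
    fix z assume "z \<in> {br (perm_args \<sigma> xs) | xs. length xs = n \<and> (\<forall>r<n. xs ! r \<in> map (uset e {0}) js ! r)}"
    then obtain xs where xs: "z = br (perm_args \<sigma> xs)" "length xs = n" "\<forall>r<n. xs ! r \<in> map (uset e {0}) js ! r"
      by blast
    have "xs = map (uvec e) js"
      by (rule nth_equalityI) (use xs assms in \<open>auto simp: uset_eq\<close>)
    then show "z \<in> {br (perm_args \<sigma> (map (uvec e) js))}" using xs by simp
  next
    fix z assume "z \<in> {br (perm_args \<sigma> (map (uvec e) js))}"
    then show "z \<in> {br (perm_args \<sigma> xs) | xs. length xs = n \<and> (\<forall>r<n. xs ! r \<in> map (uset e {0}) js ! r)}"
      using assms by (auto simp: uset_eq intro!: exI[of _ "map (uvec e) js"])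
  qed
  then show ?thesis unfolding prod_span_def by simp
qed

lemma mu_target: "Some y \<in> mu scale n br e I V s X \<Longrightarrow> y \<in> I"
  by (auto simp: mu_def a_map_def b_map_def frakI_def Let_def split: prod.splits bool.splits if_splits)

context vector_space
begin

lemma span_singleton_ne0: "span {p} \<noteq> {0} \<longleftrightarrow> p \<noteq> 0"
  using span_base[of p "{p}"] by (auto simp: span_singleton)

lemma a_map_eq:
  assumes "length js = n"
  shows "a_map scale n br e I {0} \<sigma> js =
    {Some r | r. r \<in> I \<and> br (perm_args \<sigma> (map (uvec e) js)) \<noteq> 0 \<and> br (perm_args \<sigma> (map (uvec e) js)) \<in> span {e r}}"
proof -
  define p where "p = br (perm_args \<sigma> (map (uvec e) js))"
  have P: "prod_span scale n br \<sigma> (map (uset e {0}) js) = span {p}"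
    unfolding p_def by (rule prod_span_eq[OF assms])
  have "span {p} \<subseteq> span {e r} \<longleftrightarrow> p \<in> span {e r}" for r
    using span_base[of p "{p}"] span_minimal[of "{p}" "span {e r}"] by auto
  moreover have "\<not> (span {p} \<noteq> {0} \<and> span {p} \<subseteq> {0})"
    using span_zero[of "{p}"] by auto
  ultimately show ?thesis
    unfolding a_map_def Let_def P p_def[symmetric] span_singleton_ne0 by auto
qed

lemma span_single_unique:
  assumes inj: "inj_on e I" and ind: "\<not> dependent (e ` I)"
    and r: "r \<in> I" "r' \<in> I" and p: "p \<noteq> 0" "p \<in> span {e r}" "p \<in> span {e r'}"
  shows "r = r'"
proof (rule ccontr)
  assume ne: "r \<noteq> r'"
  from p(2) obtain c where c1: "p = c *s e r" by (auto simp: span_singleton)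
  from p(3) obtain d where d1: "p = d *s e r'" by (auto simp: span_singleton)
  note cd = c1 d1
  have c: "c \<noteq> 0" using cd p by auto
  have "e r = (inverse c * d) *s e r'"
    using cd c by (metis scale_left_commute scale_one scale_scale field_class.field_inverse mult.commute)
  then have "e r \<in> span (e ` I - {e r})"
    using ne inj r by (metis (no_types, lifting) DiffI imageI inj_on_contraD singletonD span_base span_scale)
  then have "dependent (e ` I)" unfolding dependent_def using r by auto
  with ind show False by simp
qed

lemma a_map_single:
  assumes inj: "inj_on e I" and ind: "\<not> dependent (e ` I)" and len: "length js = n"
    and y: "y \<in> a_map scale n br e I {0} \<sigma> js"
  shows "a_map scale n br e I {0} \<sigma> js = {y}"
  using y span_single_unique[OF inj ind] unfolding a_map_eq[OF len] by blast

lemma perm_args_swap01: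
  assumes "\<sigma> permutes {..<length (a # b # xs)}"
  shows "perm_args (Transposition.transpose 0 1 \<circ> \<sigma>) (a # b # xs) = perm_args \<sigma> (b # a # xs)"
proof -
  have *: "(a # b # xs) ! (Transposition.transpose 0 (Suc 0) k) = (b # a # xs) ! k" for k
  proof (cases k)
    case (Suc m) then show ?thesis by (cases m) auto
  qed auto
  show ?thesis unfolding perm_args_def by (auto simp: * intro!: map_cong)
qed

lemma a_map_swap:
  assumes "length (a # b # js) = n" "\<sigma> permutes {..<n}"
  shows "a_map scale n br e I {0} (Transposition.transpose 0 1 \<circ> \<sigma>) (a # b # js) = a_map scale n br e I {0} \<sigma> (b # a # js)"
proof -
  have "perm_args (Transposition.transpose 0 1 \<circ> \<sigma>) (map (uvec e) (a # b # js)) = perm_args \<sigma> (map (uvec e) (b # a # js))"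
    using perm_args_swap01[of \<sigma> "uvec e a" "uvec e b" "map (uvec e) js"] assms by simp
  then show ?thesis using assms by (simp add: a_map_eq)
qed

lemma E_reverse:
  assumes n: "2 \<le> n" and inj: "inj_on e I" and ind: "\<not> dependent (e ` I)"
    and x: "x \<in> I" and v: "valid_tuple I n X" and y: "Some y \<in> mu scale n br e I {0} (b, Some x) X"
  shows "(y, x) \<in> Erel scale n br e I {0}"
proof -
  obtain c js where X: "X = (c, js)" by (cases X)
  have len: "length js = n - 1" and js: "set js \<subseteq> frakI I" using v X by (auto simp: valid_tuple_def)
  have yI: "y \<in> I" using mu_target[OF y] .
  have xF: "Some x \<in> frakI I" "Some y \<in> frakI I" using x yI by (auto simp: frakI_def)
  have len1: "length (z # js) = n" for z using len n by simp
  show ?thesis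
  proof (cases b)
    case False
    note b = False
    show ?thesis
    proof (cases c)
      case False
      from y obtain \<sigma> where \<sigma>: "\<sigma> permutes {..<n}" "Some y \<in> a_map scale n br e I {0} \<sigma> (Some x # js)"
        using b X False by (auto simp: mu_def)
      have "a_map scale n br e I {0} \<sigma> (Some x # js) = {Some y}"
        by (rule a_map_single[OF inj ind len1 \<sigma>(2)])
      then have "Some x \<in> mu scale n br e I {0} (False, Some y) (True, js)"
        using \<sigma>(1) xF by (auto simp: mu_def b_map_def)
      then show ?thesis using v X by (intro ErelI[of I n "(True, js)"]) (auto simp: valid_tuple_def)
    next
      case True
      from y obtain \<sigma> where \<sigma>: "\<sigma> permutes {..<n}" "Some y \<in> b_map scale n br e I {0} \<sigma> (Some x) js"
        using b X True by (auto simp: mu_def)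
      then have "a_map scale n br e I {0} \<sigma> (Some y # js) = {Some x}" by (auto simp: b_map_def)
      then have "Some x \<in> mu scale n br e I {0} (False, Some y) (False, js)"
        using \<sigma>(1) by (auto simp: mu_def)
      then show ?thesis using v X by (intro ErelI[of I n "(False, js)"]) (auto simp: valid_tuple_def)
    qed
  next
    case True
    note b = True
    show ?thesis
    proof (cases c)
      case False
      from y obtain k \<sigma> where \<sigma>: "k < n - 1" "\<sigma> permutes {..<n}"
          "Some y \<in> b_map scale n br e I {0} \<sigma> (js ! k) (Some x # take k js @ drop (Suc k) js)"
        using b X False by (auto simp: mu_def)
      define oth where "oth = take k js @ drop (Suc k) js"
      have lo: "length (Some x # Some y # oth) = n" using len \<sigma>(1) n by (simp add: oth_def)
      from \<sigma>(3) have A: "a_map scale n br e I {0} \<sigma> (Some y # Some x # oth) = {js ! k}"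
        by (auto simp: b_map_def oth_def)
      have "a_map scale n br e I {0} (Transposition.transpose 0 1 \<circ> \<sigma>) (Some x # Some y # oth) = {js ! k}"
        using a_map_swap[OF lo \<sigma>(2)] A by simp
      moreover have "Transposition.transpose 0 1 \<circ> \<sigma> permutes {..<n}"
        using n \<sigma>(2) by (intro permutes_compose permutes_swap_id) auto
      ultimately have "Some x \<in> b_map scale n br e I {0} (Transposition.transpose 0 1 \<circ> \<sigma>) (js ! k) (Some y # oth)"
        using xF by (auto simp: b_map_def)
      then have "Some x \<in> mu scale n br e I {0} (True, Some y) (False, js)"
        using \<sigma>(1) \<open>Transposition.transpose 0 1 \<circ> \<sigma> permutes {..<n}\<close>
        unfolding mu_def oth_def by auto
      then show ?thesis using v X by (intro ErelI[of I n "(False, js)"]) (auto simp: valid_tuple_def)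
    next
      case True
      then show ?thesis using y b X by (simp add: mu_def)
    qed
  qed
qed

end


lemma Erel_target: "(x, y) \<in> Erel scale n br e I V \<Longrightarrow> y \<in> I"
  unfolding Erel_def using mu_target by fast

lemma Erel_trancl_target: "(x, y) \<in> (Erel scale n br e I V)\<^sup>+ \<Longrightarrow> y \<in> I"
  by (erule tranclE) (auto dest: Erel_target)

lemma fsum_eq:
  assumes "finite F" "{a. f a \<noteq> 0} \<subseteq> F"
  shows "sum f {a. f a \<noteq> (0::'v::comm_monoid_add)} = sum f F"
  using assms by (intro sum.mono_neutral_left) auto

definition Dset :: "('k::field \<Rightarrow> 'v::ab_group_add \<Rightarrow> 'v) \<Rightarrow> ('a \<Rightarrow> 'v set) \<Rightarrow> 'a set \<Rightarrow> 'v set" where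
  "Dset scale A S = {w. \<exists>f. (\<forall>a. a \<notin> S \<longrightarrow> f a = 0) \<and> finite {a. f a \<noteq> 0} \<and>
                          (\<forall>a\<in>S. f a \<in> A a) \<and> w = sum f {a. f a \<noteq> 0}}"

context vector_space
begin

lemma E_sym_trancl:
  assumes n: "2 \<le> n" and inj: "inj_on e I" and ind: "\<not> dependent (e ` I)"
  shows "(i, j) \<in> (Erel scale n br e I {0})\<^sup>+ \<Longrightarrow> i \<in> I \<Longrightarrow> (j, i) \<in> (Erel scale n br e I {0})\<^sup>+"
proof (induction rule: trancl_induct)
  case (base y)
  then obtain b X where X1: "valid_tuple I n X" and X2: "Some y \<in> mu scale n br e I {0} (b, Some i) X"
    unfolding Erel_def by auto
  have "(y, i) \<in> Erel scale n br e I {0}" by (rule E_reverse[OF n inj ind base.prems X1 X2])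
  then show ?case by (rule r_into_trancl)
next
  case (step y z)
  have yI: "y \<in> I" using Erel_trancl_target[OF step.hyps(1)] .
  from step.hyps(2) obtain b X where X1: "valid_tuple I n X" and X2: "Some z \<in> mu scale n br e I {0} (b, Some y) X"
    unfolding Erel_def by auto
  have "(z, y) \<in> Erel scale n br e I {0}" by (rule E_reverse[OF n inj ind yI X1 X2])
  with step.IH step.prems show ?case by auto
qed

lemma conn_equiv:
  assumes n: "2 \<le> n" and inj: "inj_on e I" and ind: "\<not> dependent (e ` I)"
  shows "equiv I (conn_rel scale n br e I {0})"
proof (rule equivI)
  show "conn_rel scale n br e I {0} \<subseteq> I \<times> I"
    by (auto simp: conn_rel_def connected_iff)
  show "refl_on I (conn_rel scale n br e I {0})"
    by (auto simp: refl_on_def conn_rel_def connected_iff)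
  show "sym (conn_rel scale n br e I {0})"
    using E_sym_trancl[OF n inj ind] by (auto simp: sym_def conn_rel_def connected_iff)
  show "trans (conn_rel scale n br e I {0})"
    unfolding trans_def conn_rel_def connected_iff
    by (auto intro: trancl_trans)
qed

lemma br_zero:
  assumes nl: "n_linear scale n br" and "length xs = n" "k < n"
  shows "br (xs[k := 0]) = 0"
proof -
  have "br (xs[k := 0 + 0]) = br (xs[k := 0]) + br (xs[k := 0])"
    using nl assms unfolding n_linear_def by blast
  then show ?thesis by simp
qed

lemma multilin:
  assumes nl: "n_linear scale n br" and J: "subspace J"
    and base: "\<And>ys. length ys = n \<Longrightarrow> (\<forall>k<n. ys ! k \<in> G k) \<Longrightarrow> br ys \<in> J"
    and ys: "length ys = n" "\<forall>k<n. ys ! k \<in> span (G k)"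
  shows "br ys \<in> J"
proof -
  have claim: "\<forall>ys. length ys = n \<longrightarrow> (\<forall>k<n. ys ! k \<in> span (G k)) \<longrightarrow>
      (\<forall>k. m \<le> k \<and> k < n \<longrightarrow> ys ! k \<in> G k) \<longrightarrow> br ys \<in> J" for m
  proof (induction m)
    case 0
    then show ?case using base by auto
  next
    case (Suc m)
    show ?case
    proof (intro allI impI)
      fix ys assume l: "length ys = n" and sp: "\<forall>k<n. ys ! k \<in> span (G k)"
        and g: "\<forall>k. Suc m \<le> k \<and> k < n \<longrightarrow> ys ! k \<in> G k"
      show "br ys \<in> J"
      proof (cases "m < n")
        case False
        then show ?thesis using Suc.IH l sp g by auto
      next
        case True
        define S where "S = {a. br (ys[m := a]) \<in> J}"
        have "subspace S"
          unfolding subspace_def S_def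
        proof (intro conjI ballI allI)
          show "0 \<in> {a. br (ys[m := a]) \<in> J}" using br_zero[OF nl l True] subspace_0[OF J] by simp
        next
          fix x y assume "x \<in> {a. br (ys[m := a]) \<in> J}" "y \<in> {a. br (ys[m := a]) \<in> J}"
          moreover have "br (ys[m := x + y]) = br (ys[m := x]) + br (ys[m := y])"
            using nl l True unfolding n_linear_def by blast
          ultimately show "x + y \<in> {a. br (ys[m := a]) \<in> J}" using subspace_add[OF J] by simp
        next
          fix c x assume "x \<in> {a. br (ys[m := a]) \<in> J}"
          moreover have "br (ys[m := c *s x]) = c *s br (ys[m := x])"
            using nl l True unfolding n_linear_def by blast
          ultimately show "c *s x \<in> {a. br (ys[m := a]) \<in> J}" using subspace_scale[OF J] by simp
        qed
        moreover have "G m \<subseteq> S"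
        proof
          fix a assume a: "a \<in> G m"
          have h1: "\<forall>k<n. ys[m := a] ! k \<in> span (G k)"
            using sp span_base[OF a] l True by (auto simp: nth_list_update)
          have h2: "\<forall>k. m \<le> k \<and> k < n \<longrightarrow> ys[m := a] ! k \<in> G k"
          proof (intro allI impI)
            fix k assume "m \<le> k \<and> k < n"
            then show "ys[m := a] ! k \<in> G k" using g a l True by (cases "k = m") (auto simp: nth_list_update)
          qed
          have "br (ys[m := a]) \<in> J"
            using Suc.IH l h1 h2 by simp
          then show "a \<in> S" by (simp add: S_def)
        qed
        ultimately have "span (G m) \<subseteq> S" by (rule span_minimal[rotated])
        then have "ys ! m \<in> S" using sp True by auto
        then show ?thesis by (simp add: S_def)
      qed
    qed
  qed
  show ?thesis using claim[of n] ys by auto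
qed

lemma Dset_subspace:
  assumes "\<forall>a\<in>S. subspace (A a)"
  shows "subspace (Dset scale A S)"
  unfolding subspace_def
proof (intro conjI ballI allI)
  show "0 \<in> Dset scale A S"
    unfolding Dset_def using assms by (auto intro!: exI[of _ "\<lambda>_. 0"] simp: subspace_0)
next
  fix x y assume x: "x \<in> Dset scale A S" and y: "y \<in> Dset scale A S"
  from x obtain f where f: "\<forall>a. a \<notin> S \<longrightarrow> f a = 0" "finite {a. f a \<noteq> 0}" "\<forall>a\<in>S. f a \<in> A a" "x = sum f {a. f a \<noteq> 0}"
    unfolding Dset_def by blast
  from y obtain g where g: "\<forall>a. a \<notin> S \<longrightarrow> g a = 0" "finite {a. g a \<noteq> 0}" "\<forall>a\<in>S. g a \<in> A a" "y = sum g {a. g a \<noteq> 0}"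
    unfolding Dset_def by blast
  define F where "F = {a. f a \<noteq> 0} \<union> {a. g a \<noteq> 0}"
  have F: "finite F" using f g by (simp add: F_def)
  have sub: "{a. f a + g a \<noteq> 0} \<subseteq> F" by (auto simp: F_def)
  have "sum (\<lambda>a. f a + g a) {a. f a + g a \<noteq> 0} = sum (\<lambda>a. f a + g a) F"
    by (rule fsum_eq[OF F sub])
  also have "\<dots> = sum f F + sum g F" by (simp add: sum.distrib)
  also have "\<dots> = x + y"
  proof -
    have "x = sum f F" using f(4) fsum_eq[OF F, of f] by (auto simp: F_def)
    moreover have "y = sum g F" using g(4) fsum_eq[OF F, of g] by (auto simp: F_def)
    ultimately show ?thesis by simp
  qed
  finally show "x + y \<in> Dset scale A S"
    unfolding Dset_def using f g assms finite_subset[OF sub F]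
    by (intro CollectI exI[of _ "\<lambda>a. f a + g a"]) (auto simp: subspace_add)
next
  fix c x assume x: "x \<in> Dset scale A S"
  from x obtain f where f: "\<forall>a. a \<notin> S \<longrightarrow> f a = 0" "finite {a. f a \<noteq> 0}" "\<forall>a\<in>S. f a \<in> A a" "x = sum f {a. f a \<noteq> 0}"
    unfolding Dset_def by blast
  have sub: "{a. c *s f a \<noteq> 0} \<subseteq> {a. f a \<noteq> 0}" by auto
  have "sum (\<lambda>a. c *s f a) {a. c *s f a \<noteq> 0} = sum (\<lambda>a. c *s f a) {a. f a \<noteq> 0}"
    by (rule fsum_eq[OF f(2) sub])
  also have "\<dots> = c *s x" using f by (simp add: scale_sum_right)
  finally show "c *s x \<in> Dset scale A S"
    unfolding Dset_def using f assms finite_subset[OF sub f(2)]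
    by (intro CollectI exI[of _ "\<lambda>a. c *s f a"]) (auto simp: subspace_scale)
qed

lemma span_disjoint_Int:
  assumes ind: "independent B" and X: "X \<subseteq> B" and Y: "Y \<subseteq> B" and d: "X \<inter> Y = {}"
    and v: "v \<in> span X" "v \<in> span Y"
  shows "v = 0"
proof -
  have r1: "representation B v = representation X v" by (rule representation_extend[OF ind v(1) X])
  have r2: "representation B v = representation Y v" by (rule representation_extend[OF ind v(2) Y])
  have "representation B v b = 0" for b
    using representation_ne_zero[of X v b] representation_ne_zero[of Y v b] r1 r2 d by auto
  then have "{b. representation B v b \<noteq> 0} = {}" by auto
  moreover have "v \<in> span B" using v(1) span_mono[OF X] by auto
  ultimately show ?thesis using sum_nonzero_representation_eq[OF ind] by force
qed

end


context vector_space
begin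

lemma conn_prod:
  assumes n: "2 \<le> n" and l: "length is = n" and sI: "set is \<subseteq> I" and p: "p < n"
    and nz: "br (map e is) \<noteq> 0" and sp: "br (map e is) \<in> span {e j}" and j: "j \<in> I"
  shows "(is ! p, j) \<in> Erel scale n br e I {0}"
proof -
  define \<sigma> where "\<sigma> = Transposition.transpose 0 p"
  have \<sigma>p: "\<sigma> permutes {..<n}" unfolding \<sigma>_def using p n by (intro permutes_swap_id) auto
  have \<sigma>lt: "t < n \<Longrightarrow> \<sigma> t < n" for t using permutes_in_image[OF \<sigma>p, of t] by auto
  have \<sigma>\<sigma>: "\<sigma> (\<sigma> t) = t" for t unfolding \<sigma>_def by simp
  define L where "L = map (\<lambda>t. is ! \<sigma> t) [0..<n]"
  have lL: "length L = n" by (simp add: L_def)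
  have pa: "perm_args \<sigma> (map (uvec e \<circ> Some) L) = map e is"
    by (rule nth_equalityI) (auto simp: perm_args_def lL l L_def uvec_def \<sigma>lt \<sigma>\<sigma>)
  have ne: "L \<noteq> []" using lL n by auto
  have Lsplit: "map Some L = Some (L ! 0) # map Some (tl L)"
    using ne by (cases L) auto
  have L0: "L ! 0 = is ! p" using n unfolding L_def \<sigma>_def by simp
  have "Some j \<in> a_map scale n br e I {0} \<sigma> (map Some L)"
    using lL j nz sp by (simp add: a_map_eq pa)
  then have "Some j \<in> mu scale n br e I {0} (False, Some (L ! 0)) (False, map Some (tl L))"
    using \<sigma>p unfolding mu_def by (auto simp only: Lsplit[symmetric] prod.case bool.case)
  moreover have "valid_tuple I n (False, map Some (tl L))"
  proof -
    have "set L \<subseteq> I" using sI l \<sigma>lt by (auto simp: L_def)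
    then have "set (tl L) \<subseteq> I" using ne by (cases L) auto
    then show ?thesis using lL by (auto simp: valid_tuple_def frakI_def)
  qed
  ultimately show ?thesis using L0 ErelI by metis
qed

lemma prod_in_class:
  assumes n: "2 \<le> n" and inj: "inj_on e I" and ind: "\<not> dependent (e ` I)"
    and pm: "products_multiplicative scale n br e I"
    and C: "C \<in> I // conn_rel scale n br e I {0}"
    and l: "length is = n" and sI: "set is \<subseteq> I" and p: "p < n" and pC: "is ! p \<in> C"
  shows "\<exists>j\<in>C. \<exists>c. br (map e is) = c *s e j"
proof -
  from pm l sI obtain j c where j: "j \<in> I" "br (map e is) = c *s e j"
    unfolding products_multiplicative_def by blast
  show ?thesis
  proof (cases "br (map e is) = 0")
    case True
    then show ?thesis using pC by (intro bexI[of _ "is ! p"] exI[of _ 0]) auto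
  next
    case False
    have "br (map e is) \<in> span {e j}" using j by (simp add: span_base span_scale)
    from conn_prod[where br=br and e=e and I=I and j=j, OF n l sI p False this j(1)]
    have "(is ! p, j) \<in> Erel scale n br e I {0}" .
    then have "(is ! p, j) \<in> conn_rel scale n br e I {0}"
      using sI l p j by (auto simp: conn_rel_def connected_iff)
    then have "j \<in> C" using in_quotient_imp_closed[OF conn_equiv[OF n inj ind] C pC] by simp
    then show ?thesis using j by blast
  qed
qed

lemma J_class_eq: "J_class scale n br e {0} C = span (e ` C)"
  unfolding J_class_def using span_zero by auto

end



theorem corollary3p13:
  fixes scale :: "'k::field \<Rightarrow> 'v::ab_group_add \<Rightarrow> 'v"
    and Lg :: "'g::ab_group_add \<Rightarrow> 'v set"
    and eps :: "'g \<Rightarrow> 'g \<Rightarrow> 'k"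
    and n :: nat
    and br :: "'v list \<Rightarrow> 'v"
    and \<alpha> :: "nat \<Rightarrow> nat \<Rightarrow> nat \<Rightarrow> (nat \<Rightarrow> nat) \<Rightarrow> (nat \<Rightarrow> nat) \<Rightarrow> 'k"
    and e :: "'i \<Rightarrow> 'v"
    and I :: "'i set"
  assumes alg: "color_gLt_algebra scale Lg eps n br \<alpha>"
    and basis: "multiplicative_basis scale Lg n br UNIV e I"
  shows "internal_direct_sum scale (J_class scale n br e {0}) (I // conn_rel scale n br e I {0}) UNIV \<and>
         (\<forall>C \<in> I // conn_rel scale n br e I {0}.
            color_gLt_ideal scale Lg n br (J_class scale n br e {0} C) \<and>
            multiplicative_basis scale Lg n br (J_class scale n br e {0} C) e C)"
proof -
  have n: "2 \<le> n" and vs: "vector_space scale" and gs: "graded_space scale Lg"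
    and nl: "n_linear scale n br"
    using alg unfolding color_gLt_algebra_def graded_nary_algebra_def by auto
  interpret vs: vector_space scale by (rule vs)
  have inj: "inj_on e I" and ind: "\<not> vs.dependent (e ` I)" and spI: "vs.span (e ` I) = UNIV"
    and hom: "\<forall>i\<in>I. \<exists>g. e i \<in> Lg g" and pm: "products_multiplicative scale n br e I"
    using basis unfolding multiplicative_basis_def homogeneous_basis_def by auto
  have Lsub: "vs.subspace (Lg g)" for g
    using gs unfolding graded_space_def internal_direct_sum_def by auto
  define R where "R = conn_rel scale n br e I {0}"
  have eqv: "equiv I R" unfolding R_def by (rule vs.conn_equiv[OF n inj ind])
  have Jeq: "J_class scale n br e {0} = (\<lambda>C. vs.span (e ` C))"
    by (rule ext) (rule vs.J_class_eq)
  have Csub: "C \<subseteq> I" if "C \<in> I // R" for C using in_quotient_imp_subset[OF eqv that] .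
  have A: "internal_direct_sum scale (\<lambda>C. vs.span (e ` C)) (I // R) UNIV"
    unfolding internal_direct_sum_def
  proof (intro conjI allI impI ballI)
    fix C assume "C \<in> I // R" then show "vs.subspace (vs.span (e ` C))" by simp
  next
    fix w :: 'v
    have sub: "vs.subspace (Dset scale (\<lambda>C. vs.span (e ` C)) (I // R))"
      by (rule vs.Dset_subspace) simp
    have "e ` I \<subseteq> Dset scale (\<lambda>C. vs.span (e ` C)) (I // R)"
    proof
      fix x assume "x \<in> e ` I"
      then obtain i where i: "i \<in> I" "x = e i" by auto
      define f where "f = (\<lambda>C. if C = R `` {i} then e i else 0)"
      have q: "R `` {i} \<in> I // R" using i(1) by (rule quotientI)
      have self: "i \<in> R `` {i}" using equiv_class_self[OF eqv i(1)] .
      have supp: "{C. f C \<noteq> 0} \<subseteq> {R `` {i}}" by (auto simp: f_def)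
      have "sum f {C. f C \<noteq> 0} = sum f {R `` {i}}" by (rule fsum_eq[OF _ supp]) simp
      also have "\<dots> = e i" by (simp add: f_def)
      finally show "x \<in> Dset scale (\<lambda>C. vs.span (e ` C)) (I // R)"
        unfolding Dset_def using q self i finite_subset[OF supp]
        by (intro CollectI exI[of _ f]) (auto simp: f_def vs.span_base vs.span_zero)
    qed
    then have "vs.span (e ` I) \<subseteq> Dset scale (\<lambda>C. vs.span (e ` C)) (I // R)"
      by (rule vs.span_minimal[OF _ sub])
    then have "w \<in> Dset scale (\<lambda>C. vs.span (e ` C)) (I // R)" using spI by auto
    then show "w \<in> UNIV \<longleftrightarrow> (\<exists>f. (\<forall>a. a \<notin> I // R \<longrightarrow> f a = 0) \<and> finite {a. f a \<noteq> 0} \<and>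
                          (\<forall>a\<in>I // R. f a \<in> vs.span (e ` a)) \<and> w = sum f {a. f a \<noteq> 0})"
      unfolding Dset_def by auto
  next
    fix w :: 'v and f g
    assume h: "(\<forall>a. a \<notin> I // R \<longrightarrow> f a = 0) \<and> finite {a. f a \<noteq> 0} \<and>
                 (\<forall>a\<in>I // R. f a \<in> vs.span (e ` a)) \<and> w = sum f {a. f a \<noteq> 0} \<and>
                 (\<forall>a. a \<notin> I // R \<longrightarrow> g a = 0) \<and> finite {a. g a \<noteq> 0} \<and>
                 (\<forall>a\<in>I // R. g a \<in> vs.span (e ` a)) \<and> w = sum g {a. g a \<noteq> 0}"
    define F where "F = {a. f a \<noteq> 0} \<union> {a. g a \<noteq> 0}"
    have F: "finite F" using h by (simp add: F_def)
    have FQ: "F \<subseteq> I // R" using h by (auto simp: F_def)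
    have sf: "sum f F = w" using h fsum_eq[OF F, of f] by (auto simp: F_def)
    have sg: "sum g F = w" using h fsum_eq[OF F, of g] by (auto simp: F_def)
    define d where "d = (\<lambda>C. f C - g C)"
    have sd: "sum d F = 0" using sf sg by (simp add: d_def sum_subtractf)
    have dsp: "d C \<in> vs.span (e ` C)" if "C \<in> I // R" for C
      using h that by (auto simp: d_def intro: vs.span_diff)
    show "f = g"
    proof
      fix C
      show "f C = g C"
      proof (cases "C \<in> F")
        case False then show ?thesis by (auto simp: F_def)
      next
        case True
        have CQ: "C \<in> I // R" using True FQ by auto
        have "d C = - sum d (F - {C})"
          using sd sum.remove[OF F True, of d] by (simp add: eq_neg_iff_add_eq_0)
        moreover have "sum d (F - {C}) \<in> vs.span (e ` (I - C))"
        proof (rule vs.span_sum)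
          fix C' assume C': "C' \<in> F - {C}"
          then have C'Q: "C' \<in> I // R" using FQ by auto
          have "C' \<inter> C = {}" using quotient_disj[OF eqv C'Q CQ] C' by auto
          then have "C' \<subseteq> I - C" using Csub[OF C'Q] by auto
          then show "d C' \<in> vs.span (e ` (I - C))"
            using dsp[OF C'Q] vs.span_mono[of "e ` C'" "e ` (I - C)"] by auto
        qed
        ultimately have d1: "d C \<in> vs.span (e ` (I - C))" by (simp add: vs.span_neg)
        have "d C = 0"
        proof (rule vs.span_disjoint_Int[OF ind])
          show "e ` C \<subseteq> e ` I" using Csub[OF CQ] by auto
          show "e ` (I - C) \<subseteq> e ` I" by auto
          show "e ` C \<inter> e ` (I - C) = {}" using inj Csub[OF CQ] by (auto simp: inj_on_def)
          show "d C \<in> vs.span (e ` C)" by (rule dsp[OF CQ])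
          show "d C \<in> vs.span (e ` (I - C))" by (rule d1)
        qed
        then show ?thesis by (simp add: d_def)
      qed
    qed
  qed
  have B: "color_gLt_ideal scale Lg n br (vs.span (e ` C)) \<and> multiplicative_basis scale Lg n br (vs.span (e ` C)) e C"
    if CQ: "C \<in> I // R" for C
  proof -
    have CI: "C \<subseteq> I" by (rule Csub[OF CQ])
    have prod: "\<exists>j\<in>C. \<exists>c. br (map e ixs) = scale c (e j)"
      if "length ixs = n" "set ixs \<subseteq> I" "p < n" "ixs ! p \<in> C" for "ixs" p
      using vs.prod_in_class[OF n inj ind pm CQ[unfolded R_def] that] .
    have gsub: "graded_subspace scale Lg (vs.span (e ` C))"
    proof -
      have sub: "vs.subspace (Dset scale (\<lambda>g. vs.span (e ` C) \<inter> Lg g) UNIV)"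
        by (rule vs.Dset_subspace) (auto intro: vs.subspace_inter Lsub)
      have "e ` C \<subseteq> Dset scale (\<lambda>g. vs.span (e ` C) \<inter> Lg g) UNIV"
      proof
        fix x assume "x \<in> e ` C"
        then obtain i where i: "i \<in> C" "x = e i" by auto
        obtain g0 where g0: "e i \<in> Lg g0" using hom i CI by blast
        define f where "f = (\<lambda>g. if g = g0 then e i else 0)"
        have supp: "{g. f g \<noteq> 0} \<subseteq> {g0}" by (auto simp: f_def)
        have "sum f {g. f g \<noteq> 0} = sum f {g0}" by (rule fsum_eq[OF _ supp]) simp
        also have "\<dots> = e i" by (simp add: f_def)
        finally show "x \<in> Dset scale (\<lambda>g. vs.span (e ` C) \<inter> Lg g) UNIV"
          unfolding Dset_def using i g0 finite_subset[OF supp] Lsub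
          by (intro CollectI exI[of _ f]) (auto simp: f_def vs.span_base vs.span_zero vs.subspace_0)
      qed
      then have "vs.span (e ` C) \<subseteq> Dset scale (\<lambda>g. vs.span (e ` C) \<inter> Lg g) UNIV"
        by (rule vs.span_minimal[OF _ sub])
      then show ?thesis unfolding graded_subspace_def Dset_def by auto
    qed
    have ideal: "br (perm_args \<sigma> xs) \<in> vs.span (e ` C)"
      if \<sigma>: "\<sigma> permutes {..<n}" and xs: "length xs = n" "xs ! 0 \<in> vs.span (e ` C)" for \<sigma> xs
    proof -
      define p where "p = inv \<sigma> 0"
      have p: "p < n" unfolding p_def using permutes_in_image[OF permutes_inv[OF \<sigma>], of 0] n by auto
      define ys where "ys = perm_args \<sigma> xs"
      have ly: "length ys = n" using xs by (simp add: ys_def perm_args_def)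
      have yp: "ys ! p = xs ! 0"
        using p xs by (simp add: ys_def perm_args_def p_def permutes_inverses(1)[OF \<sigma>])
      define G where "G = (\<lambda>k. if k = p then e ` C else e ` I)"
      have "br ys \<in> vs.span (e ` C)"
      proof (rule vs.multilin[OF nl vs.subspace_span, where G = G])
        fix zs assume zl: "length zs = n" and zG: "\<forall>k<n. zs ! k \<in> G k"
        define ixs where "ixs = map (\<lambda>k. SOME i. i \<in> (if k = p then C else I) \<and> zs ! k = e i) [0..<n]"
        have isk: "ixs ! k \<in> (if k = p then C else I) \<and> zs ! k = e (ixs ! k)" if "k < n" for k
        proof -
          have ex: "\<exists>i. i \<in> (if k = p then C else I) \<and> zs ! k = e i"
            using zG that by (auto simp: G_def split: if_splits)
          have e1: "ixs ! k = (SOME i. i \<in> (if k = p then C else I) \<and> zs ! k = e i)"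
            unfolding ixs_def using that by (simp del: upt_Suc)
          show ?thesis unfolding e1 by (rule someI_ex[OF ex])
        qed
        have lis: "length ixs = n" by (simp add: ixs_def)
        have zs: "zs = map e ixs" by (rule nth_equalityI) (use zl lis isk in auto)
        have sis: "set ixs \<subseteq> I"
        proof
          fix i assume "i \<in> set ixs"
          then obtain k where "k < n" "i = ixs ! k" using lis by (auto simp: in_set_conv_nth)
          then show "i \<in> I" using isk[of k] CI by (auto split: if_splits)
        qed
        have "ixs ! p \<in> C" using isk[OF p] by simp
        from prod[OF lis sis p this] obtain j c where "j \<in> C" "br (map e ixs) = scale c (e j)" by blast
        then show "br zs \<in> vs.span (e ` C)" using zs by (auto intro: vs.span_scale vs.span_base)
      next
        show "length ys = n" by (rule ly)
        show "\<forall>k<n. ys ! k \<in> vs.span (G k)" using yp xs spI by (auto simp: G_def)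
      qed
      then show ?thesis by (simp add: ys_def)
    qed
    have ideal': "color_gLt_ideal scale Lg n br (vs.span (e ` C))"
      unfolding color_gLt_ideal_def using gsub ideal by blast
    have mb: "multiplicative_basis scale Lg n br (vs.span (e ` C)) e C"
      unfolding multiplicative_basis_def homogeneous_basis_def products_multiplicative_def
    proof (intro conjI ballI allI impI)
      show "inj_on e C" using inj CI by (rule inj_on_subset)
      show "\<not> vs.dependent (e ` C)" using ind vs.independent_mono CI by blast
      show "vs.span (e ` C) = vs.span (e ` C)" ..
      show "\<exists>g. e i \<in> Lg g" if "i \<in> C" for i using hom that CI by blast
      fix "ixs" :: "'i list" assume h: "length ixs = n \<and> set ixs \<subseteq> C"
      then have "ixs ! 0 \<in> set ixs" using n by (intro nth_mem) auto
      then have "ixs ! 0 \<in> C" using h by blast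
      then show "\<exists>j\<in>C. \<exists>c. br (map e ixs) = scale c (e j)" using prod[of "ixs" 0] h n CI by auto
    qed
    show ?thesis using ideal' mb by simp
  qed
  show ?thesis unfolding Jeq R_def[symmetric] using A B by blast
qed

end
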